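(* For every integer $n\ge3$, $\frac n3\le \mathrm{opt}(C_n)\le \frac{n+1}{3}$, and if $n\equiv 0\pmod 3$ then $\mathrm{opt}(C_n)=\frac n3$.
   Context: $C_n$ is the cycle on $n$ vertices. Multiparty equality in the local broadcast model: every vertex $v$ of a connected graph $G$ receives an input $\lambda(v)\in\{0,1\}^k$. Vertices communicate by broadcasting messages, received by all neighbours and counted once. Protocols are deterministic and static: which vertices send and message lengths depend only on $G$ and $k$, contents may depend on inputs. At the end every vertex accepts or rejects; the protocol solves the problem if all vertices accept when all inputs are equal and at least one rejects when two inputs differ. Total cost = sum of the numbers of bits broadcast; $\mathrm{opt}(G,k)$ is the minimum total cost of a solving protocol and $\mathrm{opt}(G)=\lim_{k\to\infty}\mathrm{opt}(G,k)/k$. *)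

theory Defs
  imports Complex_Main
begin

text \<open>A graph is given by a vertex set V and a
symmetric irreflexive adjacency relation E. A static deterministic protocol
is a fixed schedule of broadcasts (v, l, f): vertex v broadcasts an l-bit
message (encoded as a natural number below 2^l) whose content is computed by f
from v's input and v's view of the earlier broadcasts.\<close>

type_synonym 'a bstep = "'a \<times> nat \<times> (bool list \<Rightarrow> nat list \<Rightarrow> nat)"
type_synonym 'a protocol = "'a bstep list \<times> ('a \<Rightarrow> bool list \<Rightarrow> nat list \<Rightarrow> bool)"

definition sees :: "('a \<Rightarrow> 'a \<Rightarrow> bool) \<Rightarrow> 'a \<Rightarrow> 'a \<Rightarrow> bool" where
  "sees E u w \<longleftrightarrow> u = w \<or> E w u"

text \<open>View of u of a transcript: messages it did not receive are masked by 0
(the schedule is static, so positions carry no information about inputs).\<close>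
definition view :: "('a \<Rightarrow> 'a \<Rightarrow> bool) \<Rightarrow> 'a \<Rightarrow> ('a \<times> nat) list \<Rightarrow> nat list" where
  "view E u h = map (\<lambda>(w, m). if sees E u w then m else 0) h"

primrec exec :: "('a \<Rightarrow> 'a \<Rightarrow> bool) \<Rightarrow> 'a bstep list \<Rightarrow> ('a \<Rightarrow> bool list)
    \<Rightarrow> ('a \<times> nat) list \<Rightarrow> ('a \<times> nat) list" where
  "exec E [] lam h = h"
| "exec E (st # sts) lam h =
     (case st of (v, l, f) \<Rightarrow> exec E sts lam (h @ [(v, f (lam v) (view E v h) mod 2 ^ l)]))"

definition transcript :: "('a \<Rightarrow> 'a \<Rightarrow> bool) \<Rightarrow> 'a protocol \<Rightarrow> ('a \<Rightarrow> bool list) \<Rightarrow> ('a \<times> nat) list" where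
  "transcript E P lam = exec E (fst P) lam []"

definition accepts :: "('a \<Rightarrow> 'a \<Rightarrow> bool) \<Rightarrow> 'a protocol \<Rightarrow> ('a \<Rightarrow> bool list) \<Rightarrow> 'a \<Rightarrow> bool" where
  "accepts E P lam u = snd P u (lam u) (view E u (transcript E P lam))"

definition cost :: "'a protocol \<Rightarrow> nat" where
  "cost P = sum_list (map (\<lambda>(v, l, f). l) (fst P))"

definition solves_eq :: "'a set \<Rightarrow> ('a \<Rightarrow> 'a \<Rightarrow> bool) \<Rightarrow> nat \<Rightarrow> 'a protocol \<Rightarrow> bool" where
  "solves_eq V E k P \<longleftrightarrow>
     (\<forall>(v, l, f) \<in> set (fst P). v \<in> V) \<and>
     (\<forall>lam. (\<forall>v\<in>V. length (lam v) = k) \<longrightarrow>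
        ((\<forall>v\<in>V. \<forall>w\<in>V. lam v = lam w) \<longrightarrow> (\<forall>u\<in>V. accepts E P lam u)) \<and>
        ((\<exists>v\<in>V. \<exists>w\<in>V. lam v \<noteq> lam w) \<longrightarrow> (\<exists>u\<in>V. \<not> accepts E P lam u)))"

definition opt_k :: "'a set \<Rightarrow> ('a \<Rightarrow> 'a \<Rightarrow> bool) \<Rightarrow> nat \<Rightarrow> nat" where
  "opt_k V E k = (LEAST c. \<exists>P. solves_eq V E k P \<and> cost P = c)"

text \<open>opt(G) = lim_{k\<to>\<infinity>} opt(G,k)/k.\<close>
definition opt_rate :: "'a set \<Rightarrow> ('a \<Rightarrow> 'a \<Rightarrow> bool) \<Rightarrow> nat \<Rightarrow> real" where
  "opt_rate V E k = real (opt_k V E k) / real k"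

definition cycle_adj :: "nat \<Rightarrow> nat \<Rightarrow> nat \<Rightarrow> bool" where
  "cycle_adj n i j \<longleftrightarrow> Suc i mod n = j \<or> Suc j mod n = i"

end

theory Submission
  imports Defs
begin


lemma exec_len: "length (exec E sts lam h) = length h + length sts"
  by (induction sts arbitrary: h) (auto split: prod.splits)

lemma exec_prefix: "take (length h) (exec E sts lam h) = h"
proof (induction sts arbitrary: h)
  case Nil then show ?case by simp
next
  case (Cons st sts)
  obtain v l f where st: "st = (v,l,f)" by (cases st) auto
  let ?h = "h @ [(v, f (lam v) (view E v h) mod 2 ^ l)]"
  have "take (length ?h) (exec E sts lam ?h) = ?h" by (rule Cons.IH)
  then have "take (length h) (take (length ?h) (exec E sts lam ?h)) = h" by simp
  then show ?case using st by (simp add: min_def)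
qed

lemma exec_nth: "i < length sts \<Longrightarrow> exec E sts lam h ! (length h + i) =
   (case sts ! i of (v,l,f) \<Rightarrow> (v, f (lam v) (view E v (take (length h + i) (exec E sts lam h))) mod 2 ^ l))"
proof (induction sts arbitrary: h i)
  case Nil then show ?case by simp
next
  case (Cons st sts)
  obtain v l f where st: "st = (v,l,f)" by (cases st) auto
  let ?m = "(v, f (lam v) (view E v h) mod 2 ^ l)"
  let ?h = "h @ [?m]"
  have ex: "exec E (st # sts) lam h = exec E sts lam ?h" using st by simp
  have pre: "take (length ?h) (exec E sts lam ?h) = ?h" by (rule exec_prefix)
  have len: "length (exec E sts lam ?h) = length ?h + length sts" by (rule exec_len)
  show ?case
  proof (cases i)
    case 0
    have "exec E sts lam ?h ! length h = ?h ! length h"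
      by (metis pre length_append_singleton lessI nth_take)
    moreover have "take (length h) (exec E sts lam ?h) = h"
      by (rule exec_prefix[of "?h" E sts lam, THEN arg_cong[where f="take (length h)"], simplified])
    ultimately show ?thesis using 0 ex st by simp
  next
    case (Suc j)
    have "j < length sts" using Cons.prems Suc by simp
    from Cons.IH[OF this, of ?h]
    show ?thesis using Suc ex st by simp
  qed
qed

lemma transcript_len: "length (transcript E P lam) = length (fst P)"
  unfolding transcript_def by (simp add: exec_len)

lemma transcript_nth: "i < length (fst P) \<Longrightarrow> transcript E P lam ! i =
   (case fst P ! i of (v,l,f) \<Rightarrow> (v, f (lam v) (view E v (take i (transcript E P lam))) mod 2 ^ l))"
  unfolding transcript_def using exec_nth[of i "fst P" E lam "[]"] by simp


lemma view_take_eq: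
  assumes "i \<le> length T1" "i \<le> length T2"
    "\<forall>j<i. fst (T1!j) = fst (T2!j) \<and> (sees E u (fst (T1!j)) \<longrightarrow> snd (T1!j) = snd (T2!j))"
  shows "view E u (take i T1) = view E u (take i T2)"
  unfolding view_def
proof (rule nth_equalityI)
  show "length (map (\<lambda>(w, m). if sees E u w then m else 0) (take i T1)) =
    length (map (\<lambda>(w, m). if sees E u w then m else 0) (take i T2))" using assms by simp
next
  fix j assume "j < length (map (\<lambda>(w, m). if sees E u w then m else 0) (take i T1))"
  then have j: "j < i" using assms by simp
  then show "map (\<lambda>(w, m). if sees E u w then m else 0) (take i T1) ! j =
    map (\<lambda>(w, m). if sees E u w then m else 0) (take i T2) ! j"
    using assms by (auto split: prod.splits)
qed

lemma view_eq:
  assumes "length T1 = length T2"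
    "\<forall>j<length T1. fst (T1!j) = fst (T2!j) \<and> (sees E u (fst (T1!j)) \<longrightarrow> snd (T1!j) = snd (T2!j))"
  shows "view E u T1 = view E u T2"
  using view_take_eq[of "length T1" T1 T2 E u] assms by simp

definition close :: "('a \<Rightarrow> 'a \<Rightarrow> bool) \<Rightarrow> 'a \<Rightarrow> 'a \<Rightarrow> bool" where
  "close E v w \<longleftrightarrow> sees E v w \<or> sees E w v"

lemma transcript_fst: "i < length (fst P) \<Longrightarrow> fst (transcript E P lam ! i) = fst (fst P ! i)"
  by (simp add: transcript_nth split: prod.splits)

lemma fooling:
  assumes sol: "solves_eq V E k P" and vV: "v \<in> V" and wV: "w0 \<in> V" and wv: "w0 \<noteq> v"
    and lx: "length x = k" and ly: "length y = k"
    and cross: "\<forall>i<length (fst P). close E v (fst (fst P ! i)) \<longrightarrow>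
        transcript E P (\<lambda>_. x) ! i = transcript E P (\<lambda>_. y) ! i"
  shows "x = y"
proof (rule ccontr)
  assume xy: "x \<noteq> y"
  define lm where "lm = (\<lambda>u. if u = v then y else x)"
  define Tx where "Tx = transcript E P (\<lambda>_. x)"
  define Ty where "Ty = transcript E P (\<lambda>_. y)"
  define Tm where "Tm = transcript E P lm"
  define N where "N = length (fst P)"
  have lens: "length Tx = N" "length Ty = N" "length Tm = N"
    unfolding Tx_def Ty_def Tm_def N_def by (simp_all add: transcript_len)
  have fsts: "\<And>i. i < N \<Longrightarrow> fst (Tx!i) = fst (fst P ! i) \<and> fst (Ty!i) = fst (fst P ! i) \<and> fst (Tm!i) = fst (fst P ! i)"
    unfolding Tx_def Ty_def Tm_def N_def by (simp add: transcript_fst)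
  have main: "\<forall>i<N. Tm!i = (if fst (fst P ! i) = v then Ty!i else Tx!i)"
  proof (intro allI impI)
    fix i assume "i < N"
    then show "Tm!i = (if fst (fst P ! i) = v then Ty!i else Tx!i)"
    proof (induction i rule: less_induct)
      case (less i)
      have IH: "\<And>j. j < i \<Longrightarrow> Tm!j = (if fst (fst P ! j) = v then Ty!j else Tx!j)"
        using less by simp
      obtain s l f where st: "fst P ! i = (s,l,f)" by (cases "fst P ! i") auto
      have iN: "i < length (fst P)" using less.prems N_def by simp
      have Tm_i: "Tm!i = (s, f (lm s) (view E s (take i Tm)) mod 2^l)"
        using transcript_nth[OF iN, of E lm] st unfolding Tm_def by simp
      have Tx_i: "Tx!i = (s, f x (view E s (take i Tx)) mod 2^l)"
        using transcript_nth[OF iN, of E "\<lambda>_. x"] st unfolding Tx_def by simp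
      have Ty_i: "Ty!i = (s, f y (view E s (take i Ty)) mod 2^l)"
        using transcript_nth[OF iN, of E "\<lambda>_. y"] st unfolding Ty_def by simp
      show ?case
      proof (cases "s = v")
        case True
        have "view E s (take i Tm) = view E s (take i Ty)"
        proof (rule view_take_eq)
          show "i \<le> length Tm" "i \<le> length Ty" using lens less.prems by auto
          show "\<forall>j<i. fst (Tm!j) = fst (Ty!j) \<and> (sees E s (fst (Tm!j)) \<longrightarrow> snd (Tm!j) = snd (Ty!j))"
          proof (intro allI impI)
            fix j assume ji: "j < i"
            then have jN: "j < N" using less.prems by simp
            show "fst (Tm!j) = fst (Ty!j) \<and> (sees E s (fst (Tm!j)) \<longrightarrow> snd (Tm!j) = snd (Ty!j))"
            proof (cases "fst (fst P ! j) = v")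
              case True then show ?thesis using IH[OF ji] by simp
            next
              case False
              have "sees E s (fst (Tm!j)) \<longrightarrow> Tx!j = Ty!j"
                using cross fsts[OF jN] \<open>s = v\<close> jN N_def unfolding close_def Tx_def Ty_def by auto
              then show ?thesis using IH[OF ji] False fsts[OF jN] by auto
            qed
          qed
        qed
        then show ?thesis using Tm_i Ty_i True lm_def st by simp
      next
        case False
        have "view E s (take i Tm) = view E s (take i Tx)"
        proof (rule view_take_eq)
          show "i \<le> length Tm" "i \<le> length Tx" using lens less.prems by auto
          show "\<forall>j<i. fst (Tm!j) = fst (Tx!j) \<and> (sees E s (fst (Tm!j)) \<longrightarrow> snd (Tm!j) = snd (Tx!j))"
          proof (intro allI impI)
            fix j assume ji: "j < i"
            then have jN: "j < N" using less.prems by simp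
            show "fst (Tm!j) = fst (Tx!j) \<and> (sees E s (fst (Tm!j)) \<longrightarrow> snd (Tm!j) = snd (Tx!j))"
            proof (cases "fst (fst P ! j) = v")
              case False then show ?thesis using IH[OF ji] by simp
            next
              case True
              have "Tx!j = Ty!j"
                using cross fsts[OF jN] True jN N_def unfolding close_def Tx_def Ty_def by (auto simp: sees_def)
              then show ?thesis using IH[OF ji] True fsts[OF jN] by auto
            qed
          qed
        qed
        then show ?thesis using Tm_i Tx_i False lm_def st by simp
      qed
    qed
  qed
  have lenV: "\<forall>u\<in>V. length (lm u) = k" using lx ly lm_def by simp
  have allacc: "\<forall>u\<in>V. accepts E P lm u"
  proof
    fix u assume uV: "u \<in> V"
    show "accepts E P lm u"
    proof (cases "u = v")
      case True
      have "view E u Tm = view E u Ty"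
      proof (rule view_eq)
        show "length Tm = length Ty" using lens by simp
        show "\<forall>j<length Tm. fst (Tm!j) = fst (Ty!j) \<and> (sees E u (fst (Tm!j)) \<longrightarrow> snd (Tm!j) = snd (Ty!j))"
        proof (intro allI impI)
          fix j assume "j < length Tm"
          then have jN: "j < N" using lens by simp
          show "fst (Tm!j) = fst (Ty!j) \<and> (sees E u (fst (Tm!j)) \<longrightarrow> snd (Tm!j) = snd (Ty!j))"
          proof (cases "fst (fst P ! j) = v")
            case True then show ?thesis using main jN by simp
          next
            case False
            have "sees E u (fst (Tm!j)) \<longrightarrow> Tx!j = Ty!j"
              using cross fsts[OF jN] \<open>u = v\<close> jN N_def unfolding close_def Tx_def Ty_def by auto
            then show ?thesis using main jN False fsts[OF jN] by auto
          qed
        qed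
      qed
      moreover have "accepts E P (\<lambda>_. y) u"
        using sol uV ly unfolding solves_eq_def by auto
      ultimately show ?thesis unfolding accepts_def Tm_def Ty_def using True lm_def by simp
    next
      case False
      have "view E u Tm = view E u Tx"
      proof (rule view_eq)
        show "length Tm = length Tx" using lens by simp
        show "\<forall>j<length Tm. fst (Tm!j) = fst (Tx!j) \<and> (sees E u (fst (Tm!j)) \<longrightarrow> snd (Tm!j) = snd (Tx!j))"
        proof (intro allI impI)
          fix j assume "j < length Tm"
          then have jN: "j < N" using lens by simp
          show "fst (Tm!j) = fst (Tx!j) \<and> (sees E u (fst (Tm!j)) \<longrightarrow> snd (Tm!j) = snd (Tx!j))"
          proof (cases "fst (fst P ! j) = v")
            case False then show ?thesis using main jN by simp
          next
            case True
            have "sees E u (fst (Tm!j)) \<longrightarrow> Tx!j = Ty!j"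
              using cross fsts[OF jN] True jN N_def unfolding close_def Tx_def Ty_def by (auto simp: sees_def)
            then show ?thesis using main jN True fsts[OF jN] by auto
          qed
        qed
      qed
      moreover have "accepts E P (\<lambda>_. x) u"
        using sol uV lx unfolding solves_eq_def by auto
      ultimately show ?thesis unfolding accepts_def Tm_def Tx_def using False lm_def by simp
    qed
  qed
  have "\<exists>a\<in>V. \<exists>b\<in>V. lm a \<noteq> lm b" using vV wV wv xy lm_def by (metis)
  then have "\<exists>u\<in>V. \<not> accepts E P lm u" using sol lenV unfolding solves_eq_def by blast
  then show False using allacc by blast
qed


fun blists :: "nat list \<Rightarrow> nat list set" where
  "blists [] = {[]}"
| "blists (l # ls) = (\<lambda>(m, ms). m # ms) ` ({..<2^l} \<times> blists ls)"

lemma blists_fin_card: "finite (blists ls) \<and> card (blists ls) = 2 ^ sum_list ls"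
proof (induction ls)
  case Nil then show ?case by simp
next
  case (Cons l ls)
  have inj: "inj_on (\<lambda>(m, ms). m # ms) ({..<(2::nat)^l} \<times> blists ls)"
    by (auto simp: inj_on_def)
  show ?case using Cons by (simp add: card_image[OF inj] card_cartesian_product power_add)
qed

lemma map_in_blists: "(\<forall>i\<in>set xs. f i < 2 ^ g i) \<Longrightarrow> map f xs \<in> blists (map g xs)"
  by (induction xs) auto

lemma sum_list_filter_upt: "sum_list (map f (filter P [0..<N])) = (\<Sum>i<N. if P i then f i else 0)"
  by (induction N) auto

lemma transcript_snd_bound: "i < length (fst P) \<Longrightarrow> snd (transcript E P lam ! i) < 2 ^ fst (snd (fst P ! i))"
  by (simp add: transcript_nth split: prod.splits)

lemma lower_vertex:
  assumes sol: "solves_eq V E k P" and vV: "v \<in> V" and wV: "w0 \<in> V" and wv: "w0 \<noteq> v"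
  shows "k \<le> (\<Sum>i<length (fst P). if close E v (fst (fst P ! i)) then fst (snd (fst P ! i)) else 0)"
proof -
  define N where "N = length (fst P)"
  define I where "I = filter (\<lambda>i. close E v (fst (fst P ! i))) [0..<N]"
  define g where "g = (\<lambda>x. map (\<lambda>i. snd (transcript E P (\<lambda>_. x) ! i)) I)"
  define ls where "ls = map (\<lambda>i. fst (snd (fst P ! i))) I"
  define X where "X = {x :: bool list. set x \<subseteq> UNIV \<and> length x = k}"
  have cX: "card X = 2 ^ k" unfolding X_def by (subst card_lists_length_eq) auto
  have inj: "inj_on g X"
  proof (rule inj_onI)
    fix x y assume x: "x \<in> X" and y: "y \<in> X" and gxy: "g x = g y"
    show "x = y"
    proof (rule fooling[OF sol vV wV wv])
      show "length x = k" "length y = k" using x y X_def by auto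
      show "\<forall>i<length (fst P). close E v (fst (fst P ! i)) \<longrightarrow>
        transcript E P (\<lambda>_. x) ! i = transcript E P (\<lambda>_. y) ! i"
      proof (intro allI impI)
        fix i assume i: "i < length (fst P)" and c: "close E v (fst (fst P ! i))"
        have "i \<in> set I" using i c unfolding I_def N_def by simp
        then have "snd (transcript E P (\<lambda>_. x) ! i) = snd (transcript E P (\<lambda>_. y) ! i)"
          using gxy unfolding g_def by (simp add: map_eq_conv)
        moreover have "fst (transcript E P (\<lambda>_. x) ! i) = fst (transcript E P (\<lambda>_. y) ! i)"
          using i by (simp add: transcript_fst)
        ultimately show "transcript E P (\<lambda>_. x) ! i = transcript E P (\<lambda>_. y) ! i"
          by (simp add: prod_eq_iff)
      qed
    qed
  qed
  have sub: "g ` X \<subseteq> blists ls"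
  proof
    fix z assume "z \<in> g ` X"
    then obtain x where z: "z = g x" by auto
    have "\<forall>i\<in>set I. snd (transcript E P (\<lambda>_. x) ! i) < 2 ^ fst (snd (fst P ! i))"
      using transcript_snd_bound[of _ P E] unfolding I_def N_def by auto
    then show "z \<in> blists ls" unfolding z g_def ls_def by (rule map_in_blists)
  qed
  have "(2::nat) ^ k = card (g ` X)" using card_image[OF inj] cX by simp
  also have "\<dots> \<le> card (blists ls)" using sub blists_fin_card card_mono by blast
  also have "\<dots> = 2 ^ sum_list ls" using blists_fin_card by blast
  finally have "k \<le> sum_list ls" by simp
  also have "sum_list ls = (\<Sum>i<N. if close E v (fst (fst P ! i)) then fst (snd (fst P ! i)) else 0)"
    unfolding ls_def I_def by (simp add: sum_list_filter_upt)
  finally show ?thesis unfolding N_def .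
qed


lemma pred_mod: "0 < (s::nat) \<Longrightarrow> s < n \<Longrightarrow> (s + n - 1) mod n = s - 1"
proof -
  assume a: "0 < s" "s < n"
  then have h: "s + n - 1 = (s - 1) + n" by presburger
  have "(s + n - 1) mod n = ((s - 1) + n) mod n" by (simp only: h)
  also have "\<dots> = (s - 1) mod n" by (rule mod_add_self2)
  also have "\<dots> = s - 1" using a by simp
  finally show ?thesis .
qed

lemma suc_mod_eq: "n \<ge> 3 \<Longrightarrow> v < n \<Longrightarrow> s < n \<Longrightarrow> (Suc v mod n = s) \<longleftrightarrow> v = (s + n - 1) mod n"
proof -
  assume a: "n \<ge> 3" "v < n" "s < n"
  show ?thesis
  proof (cases "Suc v = n")
    case True
    then have "Suc v mod n = 0" by simp
    moreover have "(s + n - 1) mod n = n - 1 \<longleftrightarrow> s = 0"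
    proof (cases "s = 0")
      case True then show ?thesis using a by simp
    next
      case False
      then have "(s + n - 1) mod n = s - 1" using a pred_mod[of s n] by blast
      then show ?thesis using a False by simp
    qed
    ultimately show ?thesis using True by auto
  next
    case False
    then have "Suc v mod n = Suc v" using a by simp
    moreover have "(s + n - 1) mod n = (if s = 0 then n - 1 else s - 1)"
    proof (cases "s = 0")
      case True then show ?thesis using a by simp
    next
      case False
      then show ?thesis using a False pred_mod[of s n] by simp
    qed
    ultimately show ?thesis using a False by auto
  qed
qed

lemma close_cycle_set: assumes "n \<ge> 3" "s < n"
  shows "{v\<in>{..<n}. close (cycle_adj n) v s} = {s, Suc s mod n, (s + n - 1) mod n}"
  using assms suc_mod_eq[OF assms(1) _ assms(2)]
  unfolding close_def sees_def cycle_adj_def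
  by (auto simp: mod_less_divisor)

lemma close_cycle_card: assumes "n \<ge> 3" "s < n"
  shows "card {v\<in>{..<n}. close (cycle_adj n) v s} = 3"
proof -
  have d1: "s \<noteq> Suc s mod n" using assms by (cases "Suc s = n") auto
  have d2: "s \<noteq> (s + n - 1) mod n"
  proof (cases "s = 0")
    case True then show ?thesis using assms by simp
  next
    case False
    then show ?thesis using assms pred_mod[of s n] by simp
  qed
  have d3: "Suc s mod n \<noteq> (s + n - 1) mod n"
  proof
    assume h: "Suc s mod n = (s + n - 1) mod n"
    have "(s + n - 1) mod n < n" using assms by simp
    then have "s = (((s + n - 1) mod n) + n - 1) mod n"
      using suc_mod_eq[OF assms(1) assms(2), of "(s + n - 1) mod n"] h by simp
    show False
    proof (cases "s = 0")
      case True
      then show False using h assms by simp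
    next
      case False
      then have e: "(s + n - 1) mod n = s - 1" using assms pred_mod[of s n] by simp
      show False
      proof (cases "Suc s = n")
        case True then show False using h e assms by simp
      next
        case False2: False
        then show False using h e assms False by simp
      qed
    qed
  qed
  show ?thesis using close_cycle_set[OF assms] d1 d2 d3 by simp
qed

lemma cost_sum: "cost P = (\<Sum>i<length (fst P). fst (snd (fst P ! i)))"
  unfolding cost_def by (simp add: sum_list_sum_nth split_def atLeast0LessThan)

lemma lower_cycle:
  assumes n3: "n \<ge> 3" and sol: "solves_eq {..<n} (cycle_adj n) k P"
  shows "n * k \<le> 3 * cost P"
proof -
  define N where "N = length (fst P)"
  define s where "s = (\<lambda>i. fst (fst P ! i))"
  define l where "l = (\<lambda>i. fst (snd (fst P ! i)))"
  have sN: "\<And>i. i < N \<Longrightarrow> s i < n"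
  proof -
    fix i assume "i < N"
    then have m: "fst P ! i \<in> set (fst P)" unfolding N_def by simp
    obtain a b c where abc: "fst P ! i = (a, b, c)" by (cases "fst P ! i") auto
    have "\<forall>(v, l, f) \<in> set (fst P). v \<in> {..<n}" using sol unfolding solves_eq_def by blast
    then have "a \<in> {..<n}" using m abc by fastforce
    then show "s i < n" using abc unfolding s_def by simp
  qed
  have each: "\<And>v. v < n \<Longrightarrow> k \<le> (\<Sum>i<N. if close (cycle_adj n) v (s i) then l i else 0)"
  proof -
    fix v assume v: "v < n"
    define w where "w = (if v = 0 then 1 else 0::nat)"
    have "w < n" "w \<noteq> v" using n3 v w_def by auto
    then show "k \<le> (\<Sum>i<N. if close (cycle_adj n) v (s i) then l i else 0)"
      using lower_vertex[OF sol, of v w] v unfolding N_def s_def l_def by simp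
  qed
  have "n * k = (\<Sum>v<n. k)" by simp
  also have "\<dots> \<le> (\<Sum>v<n. \<Sum>i<N. if close (cycle_adj n) v (s i) then l i else 0)"
    by (rule sum_mono) (use each in auto)
  also have "\<dots> = (\<Sum>i<N. \<Sum>v<n. if close (cycle_adj n) v (s i) then l i else 0)"
    by (rule sum.swap)
  also have "\<dots> = (\<Sum>i<N. l i * card {v\<in>{..<n}. close (cycle_adj n) v (s i)})"
    by (rule sum.cong) (auto simp: sum.If_cases Int_def)
  also have "\<dots> = (\<Sum>i<N. 3 * l i)"
  proof (rule sum.cong)
    fix i assume "i \<in> {..<N}"
    then have "card {v\<in>{..<n}. close (cycle_adj n) v (s i)} = 3" using close_cycle_card[OF n3 sN] by simp
    then show "l i * card {v\<in>{..<n}. close (cycle_adj n) v (s i)} = 3 * l i" by simp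
  qed simp
  also have "\<dots> = 3 * cost P" unfolding cost_sum N_def l_def by (simp add: sum_distrib_left)
  finally show ?thesis .
qed


definition rt :: "nat \<Rightarrow> nat \<Rightarrow> nat" where "rt n j = (if j = 0 then n - 1 else j - 1)"
definition sc :: "nat \<Rightarrow> nat \<Rightarrow> nat" where "sc n j = Suc j mod n"
definition hv :: "nat \<Rightarrow> nat \<Rightarrow> int \<Rightarrow> int \<Rightarrow> int \<Rightarrow> int" where
  "hv n j a b c = c - int (j + rt n j) * b + int (j * rt n j) * a"

lemma rt_sc: "n \<ge> 1 \<Longrightarrow> j < n \<Longrightarrow> rt n (sc n j) = j"
  unfolding rt_def sc_def
  by (cases "Suc j = n") auto

lemma rt_ne_sc: "n \<ge> 3 \<Longrightarrow> j < n \<Longrightarrow> rt n j \<noteq> sc n j"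
  unfolding rt_def sc_def
  by (cases "Suc j = n") auto

lemma edge_alg:
  fixes a b c :: int
  assumes "p \<noteq> s" "c - int (i + p) * b + int (i * p) * a = 0" "c - int (s + i) * b + int (s * i) * a = 0"
  shows "b = int i * a \<and> c = int i * int i * a"
proof -
  have "(int s - int p) * (b - int i * a) = 0" using assms(2,3) by (simp add: algebra_simps)
  then have b: "b = int i * a" using assms(1) by simp
  then have "c = int (i + p) * (int i * a) - int (i * p) * a" using assms(2) by simp
  then have "c = int i * int i * a" by (simp add: algebra_simps)
  then show ?thesis using b by simp
qed

lemma hv_diff: "hv n j a' b' c' - hv n j a b c = (c' - c) - int (j + rt n j) * (b' - b) + int (j * rt n j) * (a' - a)"
  unfolding hv_def by (simp add: algebra_simps)

lemma sq_sum: "(\<Sum>j<n. (f j - y)^2) = (\<Sum>j<n. (f j)^2) - 2 * y * (\<Sum>j<n. f j) + int n * y^2"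
  for f :: "nat \<Rightarrow> int"
  by (induction n) (simp_all add: power2_diff algebra_simps)

lemma core:
  fixes a b c :: "nat \<Rightarrow> nat \<Rightarrow> int"
  assumes n3: "n \<ge> 3"
  and e1: "\<forall>j<n. \<forall>d<D. hv n j (a j d) (b j d) (c j d) = hv n j (a (sc n j) d) (b (sc n j) d) (c (sc n j) d)"
  and e2: "\<forall>j<n. \<forall>d<D. hv n (sc n j) (a j d) (b j d) (c j d) = hv n (sc n j) (a (sc n j) d) (b (sc n j) d) (c (sc n j) d)"
  and sph: "\<forall>j<n. (\<Sum>d<D. (a j d)^2) = (\<Sum>d<D. (a (sc n j) d)^2)"
  shows "\<forall>j<n. \<forall>d<D. a j d = a 0 d \<and> b j d = b 0 d \<and> c j d = c 0 d"
proof -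
  have S1: "\<And>j d. j < n \<Longrightarrow> d < D \<Longrightarrow> b (sc n j) d - b j d = int j * (a (sc n j) d - a j d)
       \<and> c (sc n j) d - c j d = int j * int j * (a (sc n j) d - a j d)"
  proof -
    fix j d assume j: "j < n" and d: "d < D"
    have h1: "hv n j (a (sc n j) d) (b (sc n j) d) (c (sc n j) d) - hv n j (a j d) (b j d) (c j d) = 0"
      using e1 j d by simp
    have h2: "hv n (sc n j) (a (sc n j) d) (b (sc n j) d) (c (sc n j) d) - hv n (sc n j) (a j d) (b j d) (c j d) = 0"
      using e2 j d by simp
    have r: "rt n (sc n j) = j" using rt_sc n3 j by simp
    show "b (sc n j) d - b j d = int j * (a (sc n j) d - a j d)
       \<and> c (sc n j) d - c j d = int j * int j * (a (sc n j) d - a j d)"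
    proof (rule edge_alg[where p = "rt n j" and s = "sc n j"])
      show "rt n j \<noteq> sc n j" using rt_ne_sc n3 j by simp
      show "c (sc n j) d - c j d - int (j + rt n j) * (b (sc n j) d - b j d) + int (j * rt n j) * (a (sc n j) d - a j d) = 0"
        using h1 unfolding hv_diff .
      show "c (sc n j) d - c j d - int (sc n j + j) * (b (sc n j) d - b j d) + int (sc n j * j) * (a (sc n j) d - a j d) = 0"
        using h2 unfolding hv_diff r .
    qed
  qed
  have scp: "\<And>p. Suc p < n \<Longrightarrow> sc n p = Suc p" unfolding sc_def by simp
  have scl: "sc n (n - 1) = 0" unfolding sc_def using n3 by simp
  have S2: "\<And>d p. d < D \<Longrightarrow> p < n \<Longrightarrow> b p d - b 0 d = int p * a p d - (\<Sum>i\<in>{1..p}. a i d)"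
  proof -
    fix d p assume d: "d < D"
    show "p < n \<Longrightarrow> b p d - b 0 d = int p * a p d - (\<Sum>i\<in>{1..p}. a i d)"
    proof (induction p)
      case 0 then show ?case by simp
    next
      case (Suc p)
      have "b (Suc p) d - b p d = int p * (a (Suc p) d - a p d)"
        using S1[of p d] d Suc.prems scp[of p] by simp
      moreover have "(\<Sum>i\<in>{1..Suc p}. a i d) = (\<Sum>i\<in>{1..p}. a i d) + a (Suc p) d"
        by simp
      ultimately show ?case using Suc by (simp add: algebra_simps)
    qed
  qed
  have S3: "\<And>d. d < D \<Longrightarrow> (\<Sum>i<n. a i d) = int n * a 0 d"
  proof -
    fix d assume d: "d < D"
    have A: "b (n-1) d - b 0 d = int (n-1) * a (n-1) d - (\<Sum>i\<in>{1..n-1}. a i d)"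
      using S2[of d "n-1"] d n3 by simp
    have B: "b 0 d - b (n-1) d = int (n-1) * (a 0 d - a (n-1) d)"
      using S1[of "n-1" d] d n3 scl by simp
    have C: "(\<Sum>i<n. a i d) = a 0 d + (\<Sum>i\<in>{1..n-1}. a i d)"
    proof -
      have "{..<n} = insert 0 {1..n-1}" using n3 by auto
      then show ?thesis by simp
    qed
    have "int (n - 1) = int n - 1" using n3 by simp
    then show "(\<Sum>i<n. a i d) = int n * a 0 d" using A B C by (simp add: algebra_simps)
  qed
  have S4: "\<And>j. j < n \<Longrightarrow> (\<Sum>d<D. (a j d)^2) = (\<Sum>d<D. (a 0 d)^2)"
  proof -
    fix j show "j < n \<Longrightarrow> (\<Sum>d<D. (a j d)^2) = (\<Sum>d<D. (a 0 d)^2)"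
    proof (induction j)
      case 0 then show ?case by simp
    next
      case (Suc j)
      then show ?case using sph scp[of j] by force
    qed
  qed
  define Q where "Q = (\<Sum>d<D. (a 0 d)^2)"
  have S5: "(\<Sum>j<n. \<Sum>d<D. (a j d - a 0 d)^2) = 0"
  proof -
    have "(\<Sum>j<n. \<Sum>d<D. (a j d - a 0 d)^2) = (\<Sum>d<D. \<Sum>j<n. (a j d - a 0 d)^2)"
      by (rule sum.swap)
    also have "\<dots> = (\<Sum>d<D. (\<Sum>j<n. (a j d)^2) - int n * (a 0 d)^2)"
    proof (rule sum.cong)
      fix d assume "d \<in> {..<D}"
      then have s3: "(\<Sum>i<n. a i d) = int n * a 0 d" using S3 by simp
      have "(\<Sum>j<n. (a j d - a 0 d)^2) = (\<Sum>j<n. (a j d)^2) - 2 * a 0 d * (\<Sum>j<n. a j d) + int n * (a 0 d)^2"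
        by (rule sq_sum)
      also have "\<dots> = (\<Sum>j<n. (a j d)^2) - int n * (a 0 d)^2"
        unfolding s3 by (simp add: power2_eq_square algebra_simps)
      finally show "(\<Sum>j<n. (a j d - a 0 d)^2) = (\<Sum>j<n. (a j d)^2) - int n * (a 0 d)^2" .
    qed simp
    also have "\<dots> = (\<Sum>d<D. \<Sum>j<n. (a j d)^2) - int n * Q"
      unfolding Q_def by (simp add: sum_subtractf sum_distrib_left)
    also have "(\<Sum>d<D. \<Sum>j<n. (a j d)^2) = (\<Sum>j<n. \<Sum>d<D. (a j d)^2)"
      by (rule sum.swap)
    also have "\<dots> = (\<Sum>j<n. Q)"
    proof (rule sum.cong)
      fix j assume "j \<in> {..<n}"
      then have "j < n" by simp
      from S4[OF this] show "(\<Sum>d<D. (a j d)^2) = Q" unfolding Q_def .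
    qed simp
    also have "\<dots> = int n * Q" by simp
    finally show ?thesis by simp
  qed
  have S6: "\<And>j d. j < n \<Longrightarrow> d < D \<Longrightarrow> a j d = a 0 d"
  proof -
    fix j d assume j: "j < n" and d: "d < D"
    have "\<forall>j\<in>{..<n}. (\<Sum>d<D. (a j d - a 0 d)^2) = 0"
      using S5 by (subst sum_nonneg_eq_0_iff[symmetric]) (auto intro: sum_nonneg)
    then have "(\<Sum>d<D. (a j d - a 0 d)^2) = 0" using j by simp
    then have "\<forall>d\<in>{..<D}. (a j d - a 0 d)^2 = 0"
      by (subst sum_nonneg_eq_0_iff[symmetric]) auto
    then show "a j d = a 0 d" using d by simp
  qed
  have S7: "\<And>j d. j < n \<Longrightarrow> d < D \<Longrightarrow> b j d = b 0 d \<and> c j d = c 0 d"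
  proof -
    fix j d assume d: "d < D"
    show "j < n \<Longrightarrow> b j d = b 0 d \<and> c j d = c 0 d"
    proof (induction j)
      case 0 then show ?case by simp
    next
      case (Suc j)
      have "a (Suc j) d = a j d" using S6[of "Suc j" d] S6[of j d] Suc.prems d by simp
      then show ?case using S1[of j d] Suc d scp[of j] by simp
    qed
  qed
  show ?thesis using S6 S7 by blast
qed


definition bitv :: "bool list \<Rightarrow> nat \<Rightarrow> bool" where "bitv x i \<longleftrightarrow> i < length x \<and> x ! i"
definition digit :: "nat \<Rightarrow> bool list \<Rightarrow> nat \<Rightarrow> nat" where
  "digit m x d = (\<Sum>i<m. if bitv x (m*d+i) then 2^i else 0)"

lemma bin_bound: "(\<Sum>i<m. if f i then 2^i else 0::nat) < 2^m"
proof (induction m)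
  case 0 then show ?case by simp
next
  case (Suc m) then show ?case by (auto split: if_splits)
qed

lemma bin_inj: "(\<Sum>i<m. if f i then (2::nat)^i else 0) = (\<Sum>i<m. if g i then 2^i else 0) \<Longrightarrow> i < m \<Longrightarrow> f i = g i"
proof (induction m arbitrary: i)
  case 0 then show ?case by simp
next
  case (Suc m)
  let ?F = "(\<Sum>i<m. if f i then (2::nat)^i else 0)"
  let ?G = "(\<Sum>i<m. if g i then (2::nat)^i else 0)"
  have F: "?F < 2^m" "?G < 2^m" using bin_bound by blast+
  have eq: "?F + (if f m then 2^m else 0) = ?G + (if g m then 2^m else 0)" using Suc.prems by simp
  have fm: "f m = g m"
  proof (rule ccontr)
    assume "f m \<noteq> g m"
    then show False using eq F by (cases "f m") auto
  qed
  then have "?F = ?G" using eq by simp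
  then show ?case using Suc fm by (cases "i = m") auto
qed

lemma digit_bound: "digit m x d < 2^m"
  unfolding digit_def by (rule bin_bound)

lemma digits_inj:
  assumes "length x = k" "length y = k" "k \<le> K * m" "\<forall>d<K. digit m x d = digit m y d"
  shows "x = y"
proof (rule nth_equalityI)
  show "length x = length y" using assms by simp
next
  fix i assume "i < length x"
  then have i: "i < k" using assms by simp
  then have m0: "m > 0" using assms(3) by (cases m) auto
  have iK: "i < K * m" using i assms(3) by simp
  define d where "d = i div m"
  define r where "r = i mod m"
  have dK: "d < K" unfolding d_def using iK m0 by (simp add: less_mult_imp_div_less)
  have rm: "r < m" unfolding r_def using m0 by simp
  have idr: "m * d + r = i" unfolding d_def r_def by simp
  have "bitv x (m*d+r) = bitv y (m*d+r)"
    using bin_inj[where m=m and f="\<lambda>j. bitv x (m*d+j)" and g="\<lambda>j. bitv y (m*d+j)" and i=r] assms(4) dK rm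
    unfolding digit_def by simp
  then show "x ! i = y ! i" using idr i assms(1,2) unfolding bitv_def by simp
qed

definition msgv :: "nat \<Rightarrow> nat \<Rightarrow> nat \<Rightarrow> nat \<Rightarrow> nat \<Rightarrow> bool list \<Rightarrow> nat" where
  "msgv n m D j d x = nat (hv n j (int (digit m x d)) (int (digit m x (D+d))) (int (digit m x (2*D+d))) + int (2*n*2^m))"

definition smsg :: "nat \<Rightarrow> nat \<Rightarrow> bool list \<Rightarrow> nat" where
  "smsg m D x = (\<Sum>d<D. (digit m x d)^2)"

definition vsteps :: "nat \<Rightarrow> nat \<Rightarrow> nat \<Rightarrow> nat \<Rightarrow> nat bstep list" where
  "vsteps n m D j = map (\<lambda>d. (j, m + 2*n, \<lambda>x (_::nat list). msgv n m D j d x)) [0..<D]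
      @ [(j, 2*m + D, \<lambda>x (_::nat list). smsg m D x)]"

definition steps :: "nat \<Rightarrow> nat \<Rightarrow> nat \<Rightarrow> nat bstep list" where
  "steps n m D = concat (map (vsteps n m D) [0..<n])"

definition chk :: "('a \<Rightarrow> 'a \<Rightarrow> bool) \<Rightarrow> 'a bstep list \<Rightarrow> 'a \<Rightarrow> bool list \<Rightarrow> nat list \<Rightarrow> bool" where
  "chk E sts u x vw \<longleftrightarrow> (\<forall>i<length sts. case sts ! i of (w, l, f) \<Rightarrow> sees E u w \<longrightarrow> vw ! i = f x [] mod 2^l)"

definition proto :: "nat \<Rightarrow> nat \<Rightarrow> nat \<Rightarrow> nat protocol" where
  "proto n m D = (steps n m D, chk (cycle_adj n) (steps n m D))"

lemma nonadaptive_accepts: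
  assumes na: "\<forall>(w, l, f) \<in> set sts. \<forall>x vw. f x vw = f x []"
  shows "accepts E (sts, chk E sts) lam u \<longleftrightarrow>
    (\<forall>(w, l, f) \<in> set sts. sees E u w \<longrightarrow> f (lam w) [] mod 2^l = f (lam u) [] mod 2^l)"
proof -
  define T where "T = transcript E (sts, chk E sts) lam"
  have lT: "length T = length sts" unfolding T_def by (simp add: transcript_len)
  have Ti: "\<And>i. i < length sts \<Longrightarrow> T ! i = (case sts ! i of (w, l, f) \<Rightarrow> (w, f (lam w) [] mod 2^l))"
  proof -
    fix i assume i: "i < length sts"
    obtain w l f where st: "sts ! i = (w, l, f)" by (cases "sts ! i") auto
    have "(w, l, f) \<in> set sts" using st i by (metis nth_mem)
    then have "\<forall>x vw. f x vw = f x []" using na by blast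
    then have "f (lam w) (view E w (take i T)) = f (lam w) []" by blast
    then show "T ! i = (case sts ! i of (w, l, f) \<Rightarrow> (w, f (lam w) [] mod 2^l))"
      using transcript_nth[of i "(sts, chk E sts)" E lam] i st unfolding T_def[symmetric] by simp
  qed
  have vi: "\<And>i. i < length sts \<Longrightarrow> view E u T ! i = (case sts ! i of (w, l, f) \<Rightarrow> if sees E u w then f (lam w) [] mod 2^l else 0)"
    using Ti lT unfolding view_def by (auto split: prod.splits)
  have "accepts E (sts, chk E sts) lam u \<longleftrightarrow>
      (\<forall>i<length sts. case sts ! i of (w, l, f) \<Rightarrow> sees E u w \<longrightarrow> f (lam w) [] mod 2^l = f (lam u) [] mod 2^l)"
    unfolding accepts_def chk_def T_def[symmetric] using vi by (auto split: prod.splits)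
  also have "\<dots> \<longleftrightarrow> (\<forall>st \<in> set sts. case st of (w, l, f) \<Rightarrow> sees E u w \<longrightarrow> f (lam w) [] mod 2^l = f (lam u) [] mod 2^l)"
    by (simp add: all_set_conv_all_nth)
  finally show ?thesis by simp
qed


lemma pow4_bound: "(n+1)^2 \<le> (4::nat)^n" if "n \<ge> 1" for n :: nat
  using that
proof (induction n rule: nat_induct_at_least)
  case base then show ?case by (simp add: power2_eq_square)
next
  case (Suc n)
  have "(Suc n + 1)^2 \<le> 4 * (n+1)^2" by (simp add: power2_eq_square)
  also have "\<dots> \<le> 4 * 4^n" using Suc.IH by simp
  finally show ?case by simp
qed

lemma rt_le: "j < n \<Longrightarrow> rt n j < n" unfolding rt_def by auto

lemma hv_bounds:
  assumes jn: "j < n" and A: "0 \<le> A" "A < 2^m" and B: "0 \<le> B" "B < 2^m" and C: "0 \<le> C" "C < 2^m"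
  shows "0 \<le> hv n j A B C + int (2*n*2^m) \<and> hv n j A B C + int (2*n*2^m) < 2^(m + 2*n)"
proof -
  define J1 where "J1 = int (j + rt n j)"
  define J2 where "J2 = int (j * rt n j)"
  have r: "rt n j < n" using rt_le jn .
  have J1: "0 \<le> J1" "J1 \<le> 2 * int n" unfolding J1_def using jn r by auto
  have J2: "0 \<le> J2" "J2 \<le> int n * int n" unfolding J2_def using jn r
    by (auto simp del: of_nat_mult simp add: of_nat_mult[symmetric] intro: mult_mono)
  have h: "hv n j A B C = C - J1 * B + J2 * A" unfolding hv_def J1_def J2_def by simp
  have q: "int (2*n*2^m) = 2 * int n * 2^m" by simp
  have "J1 * B \<le> (2 * int n) * 2^m" using J1 B by (intro mult_mono) auto
  moreover have "0 \<le> J2 * A" using J2 A by simp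
  ultimately have lo: "0 \<le> hv n j A B C + int (2*n*2^m)" using h q C by linarith
  have "J2 * A \<le> (int n * int n) * 2^m" using J2 A by (intro mult_mono) auto
  moreover have "0 \<le> J1 * B" using J1 B by simp
  ultimately have "hv n j A B C + int (2*n*2^m) < 2^m + (int n * int n) * 2^m + 2 * int n * 2^m"
    using h q C by linarith
  also have "\<dots> = int ((n+1)^2) * 2^m" by (simp add: power2_eq_square algebra_simps)
  also have "\<dots> \<le> int (4^n) * 2^m"
  proof -
    have p: "(n+1)^2 \<le> 4^n" using pow4_bound[of n] jn by simp
    have "int ((n+1)^2) \<le> int (4^n)" using of_nat_mono[OF p] .
    then show ?thesis by (intro mult_right_mono) auto
  qed
  also have "\<dots> = 2^(m + 2*n)" by (simp add: power_add power_mult)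
  finally show ?thesis using lo by simp
qed

lemma digit_int: "0 \<le> int (digit m x d) \<and> int (digit m x d) < 2^m"
  using digit_bound[of m x d] by (simp add: of_nat_less_iff[symmetric])

lemma msgv_bound: "j < n \<Longrightarrow> msgv n m D j d x < 2^(m + 2*n)"
proof -
  assume jn: "j < n"
  have "hv n j (int (digit m x d)) (int (digit m x (D+d))) (int (digit m x (2*D+d))) + int (2*n*2^m) < 2^(m+2*n)"
    using hv_bounds[OF jn] digit_int by blast
  then show ?thesis unfolding msgv_def by (simp add: nat_less_iff)
qed

lemma msgv_eq:
  assumes jn: "j < n" and e: "msgv n m D j d x mod 2^(m+2*n) = msgv n m D j d y mod 2^(m+2*n)"
  shows "hv n j (int (digit m x d)) (int (digit m x (D+d))) (int (digit m x (2*D+d)))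
       = hv n j (int (digit m y d)) (int (digit m y (D+d))) (int (digit m y (2*D+d)))"
proof -
  have "msgv n m D j d x = msgv n m D j d y" using e msgv_bound[OF jn] by simp
  moreover have "0 \<le> hv n j (int (digit m x d)) (int (digit m x (D+d))) (int (digit m x (2*D+d))) + int (2*n*2^m)"
    using hv_bounds[OF jn] digit_int by blast
  moreover have "0 \<le> hv n j (int (digit m y d)) (int (digit m y (D+d))) (int (digit m y (2*D+d))) + int (2*n*2^m)"
    using hv_bounds[OF jn] digit_int by blast
  ultimately show ?thesis unfolding msgv_def by simp
qed

lemma smsg_bound: "smsg m D x < 2^(2*m + D)"
proof -
  have "smsg m D x \<le> (\<Sum>d<D. 4^m)"
    unfolding smsg_def
  proof (rule sum_mono)
    fix d
    have "digit m x d < 2^m" by (rule digit_bound)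
    then have "(digit m x d)^2 \<le> (2^m)^2" by (intro power_mono) auto
    also have "\<dots> = (2^2)^m" by (metis power_mult mult.commute)
    also have "\<dots> = 4^m" by simp
    finally show "(digit m x d)^2 \<le> 4^m" .
  qed
  also have "\<dots> = D * 4^m" by simp
  also have "\<dots> < 2^D * 4^m" by simp
  also have "\<dots> = 2^(2*m + D)" by (simp add: power_add power_mult)
  finally show ?thesis .
qed

lemma steps_cases: "st \<in> set (steps n m D) \<Longrightarrow> \<exists>j<n. (\<exists>d<D. st = (j, m + 2*n, \<lambda>x _. msgv n m D j d x))
     \<or> st = (j, 2*m + D, \<lambda>x _. smsg m D x)"
  unfolding steps_def vsteps_def by fastforce

lemma steps_mem1: "j < n \<Longrightarrow> d < D \<Longrightarrow> (j, m + 2*n, \<lambda>x (_::nat list). msgv n m D j d x) \<in> set (steps n m D)"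
  unfolding steps_def vsteps_def by auto

lemma steps_mem2: "j < n \<Longrightarrow> (j, 2*m + D, \<lambda>x (_::nat list). smsg m D x) \<in> set (steps n m D)"
  unfolding steps_def vsteps_def by auto

lemma my_sum_list_concat: "sum_list (concat xss) = sum_list (map sum_list xss)" for xss :: "nat list list"
  by (induction xss) auto

lemma proto_cost: "cost (proto n m D) = n * (D * (m + 2*n) + (2*m + D))"
proof -
  have "\<And>j. sum_list (map (\<lambda>(v, l, f). l) (vsteps n m D j)) = D * (m + 2*n) + (2*m + D)"
    unfolding vsteps_def by (simp add: sum_list_triv comp_def)
  then show ?thesis unfolding cost_def proto_def steps_def
    by (simp add: map_concat my_sum_list_concat comp_def sum_list_triv)
qed


lemma steps_fst: "st \<in> set (steps n m D) \<Longrightarrow> fst st < n"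
proof -
  assume "st \<in> set (steps n m D)"
  then obtain j where "j < n" "(\<exists>d<D. st = (j, m + 2*n, \<lambda>x _. msgv n m D j d x)) \<or> st = (j, 2*m + D, \<lambda>x _. smsg m D x)"
    using steps_cases by blast
  then show ?thesis by auto
qed

lemma steps_na: "\<forall>(w, l, f) \<in> set (steps n m D). \<forall>x vw. f x vw = f x []"
proof
  fix st assume "st \<in> set (steps n m D)"
  then obtain j where "j < n" "(\<exists>d<D. st = (j, m + 2*n, \<lambda>x _. msgv n m D j d x)) \<or> st = (j, 2*m + D, \<lambda>x _. smsg m D x)"
    using steps_cases by blast
  then show "case st of (w, l, f) \<Rightarrow> \<forall>x vw. f x vw = f x []" by auto
qed

lemma proto_accepts: "accepts (cycle_adj n) (proto n m D) lam u \<longleftrightarrow>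
    (\<forall>(w, l, f) \<in> set (steps n m D). sees (cycle_adj n) u w \<longrightarrow> f (lam w) [] mod 2^l = f (lam u) [] mod 2^l)"
  unfolding proto_def by (rule nonadaptive_accepts[OF steps_na])

lemma proto_solves:
  assumes n3: "n \<ge> 3" and kle: "k \<le> 3 * D * m"
  shows "solves_eq {..<n} (cycle_adj n) k (proto n m D)"
  unfolding solves_eq_def
proof (intro conjI allI impI)
  show "\<forall>(v, l, f) \<in> set (fst (proto n m D)). v \<in> {..<n}"
  proof
    fix st assume "st \<in> set (fst (proto n m D))"
    then have "fst st < n" using steps_fst unfolding proto_def by simp
    then show "case st of (v, l, f) \<Rightarrow> v \<in> {..<n}" by (cases st) auto
  qed
next
  fix lam :: "nat \<Rightarrow> bool list"
  assume "\<forall>v\<in>{..<n}. length (lam v) = k" "\<forall>v\<in>{..<n}. \<forall>w\<in>{..<n}. lam v = lam w"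
  then have eq: "\<And>v w. v < n \<Longrightarrow> w < n \<Longrightarrow> lam v = lam w" by blast
  show "\<forall>u\<in>{..<n}. accepts (cycle_adj n) (proto n m D) lam u"
  proof
    fix u assume u: "u \<in> {..<n}"
    show "accepts (cycle_adj n) (proto n m D) lam u"
      unfolding proto_accepts
    proof
      fix st assume st: "st \<in> set (steps n m D)"
      obtain w l f where wlf: "st = (w, l, f)" by (cases st) auto
      have "w < n" using steps_fst[OF st] wlf by auto
      then have "lam w = lam u" using eq[of w u] u by simp
      then show "case st of (w, l, f) \<Rightarrow> sees (cycle_adj n) u w \<longrightarrow> f (lam w) [] mod 2^l = f (lam u) [] mod 2^l"
        using wlf by simp
    qed
  qed
next
  fix lam :: "nat \<Rightarrow> bool list"
  assume len: "\<forall>v\<in>{..<n}. length (lam v) = k" and ne: "\<exists>v\<in>{..<n}. \<exists>w\<in>{..<n}. lam v \<noteq> lam w"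
  show "\<exists>u\<in>{..<n}. \<not> accepts (cycle_adj n) (proto n m D) lam u"
  proof (rule ccontr)
    assume "\<not> (\<exists>u\<in>{..<n}. \<not> accepts (cycle_adj n) (proto n m D) lam u)"
    then have acc: "\<And>u st. u < n \<Longrightarrow> st \<in> set (steps n m D) \<Longrightarrow>
        (case st of (w, l, f) \<Rightarrow> sees (cycle_adj n) u w \<longrightarrow> f (lam w) [] mod 2^l = f (lam u) [] mod 2^l)"
      unfolding proto_accepts by blast
    have scn: "\<And>j. j < n \<Longrightarrow> sc n j < n" unfolding sc_def using n3 by simp
    have see1: "\<And>j. j < n \<Longrightarrow> sees (cycle_adj n) (sc n j) j"
      unfolding sees_def cycle_adj_def sc_def by simp
    have see2: "\<And>j. j < n \<Longrightarrow> sees (cycle_adj n) j (sc n j)"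
      unfolding sees_def cycle_adj_def sc_def by simp
    define a where "a = (\<lambda>j d. int (digit m (lam j) d))"
    define b where "b = (\<lambda>j d. int (digit m (lam j) (D+d)))"
    define c where "c = (\<lambda>j d. int (digit m (lam j) (2*D+d)))"
    have e1: "\<forall>j<n. \<forall>d<D. hv n j (a j d) (b j d) (c j d) = hv n j (a (sc n j) d) (b (sc n j) d) (c (sc n j) d)"
    proof (intro allI impI)
      fix j d assume j: "j < n" and d: "d < D"
      have "msgv n m D j d (lam j) mod 2^(m+2*n) = msgv n m D j d (lam (sc n j)) mod 2^(m+2*n)"
        using acc[OF scn[OF j] steps_mem1[OF j d, of m]] see1[OF j] by simp
      then show "hv n j (a j d) (b j d) (c j d) = hv n j (a (sc n j) d) (b (sc n j) d) (c (sc n j) d)"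
        unfolding a_def b_def c_def by (rule msgv_eq[OF j])
    qed
    have e2: "\<forall>j<n. \<forall>d<D. hv n (sc n j) (a j d) (b j d) (c j d) = hv n (sc n j) (a (sc n j) d) (b (sc n j) d) (c (sc n j) d)"
    proof (intro allI impI)
      fix j d assume j: "j < n" and d: "d < D"
      have "msgv n m D (sc n j) d (lam (sc n j)) mod 2^(m+2*n) = msgv n m D (sc n j) d (lam j) mod 2^(m+2*n)"
        using acc[OF j steps_mem1[OF scn[OF j] d, of m]] see2[OF j] by simp
      then show "hv n (sc n j) (a j d) (b j d) (c j d) = hv n (sc n j) (a (sc n j) d) (b (sc n j) d) (c (sc n j) d)"
        unfolding a_def b_def c_def using msgv_eq[OF scn[OF j]] by metis
    qed
    have sph: "\<forall>j<n. (\<Sum>d<D. (a j d)^2) = (\<Sum>d<D. (a (sc n j) d)^2)"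
    proof (intro allI impI)
      fix j assume j: "j < n"
      have "smsg m D (lam j) mod 2^(2*m+D) = smsg m D (lam (sc n j)) mod 2^(2*m+D)"
        using acc[OF scn[OF j] steps_mem2[OF j, of m D]] see1[OF j] by simp
      then have "smsg m D (lam j) = smsg m D (lam (sc n j))" using smsg_bound by simp
      then have "int (smsg m D (lam j)) = int (smsg m D (lam (sc n j)))" by simp
      then show "(\<Sum>d<D. (a j d)^2) = (\<Sum>d<D. (a (sc n j) d)^2)"
        unfolding a_def smsg_def by simp
    qed
    have allc: "\<forall>j<n. \<forall>d<D. a j d = a 0 d \<and> b j d = b 0 d \<and> c j d = c 0 d"
      by (rule core[OF n3 e1 e2 sph])
    have lam0: "\<And>j. j < n \<Longrightarrow> lam j = lam 0"
    proof -
      fix j assume j: "j < n"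
      show "lam j = lam 0"
      proof (rule digits_inj[where K = "3*D" and m = m])
        show "length (lam j) = k" "length (lam 0) = k" using len j n3 by auto
        show "k \<le> 3 * D * m" using kle .
        show "\<forall>d<3 * D. digit m (lam j) d = digit m (lam 0) d"
        proof (intro allI impI)
          fix d assume d: "d < 3 * D"
          consider "d < D" | "D \<le> d \<and> d < 2*D" | "2*D \<le> d" by linarith
          then show "digit m (lam j) d = digit m (lam 0) d"
          proof cases
            case 1
            then have "a j d = a 0 d" using allc j by blast
            then show ?thesis unfolding a_def by simp
          next
            case 2
            then have dd: "d - D < D" "D + (d - D) = d" by auto
            then have "b j (d - D) = b 0 (d - D)" using allc j by blast
            then show ?thesis unfolding b_def using dd(2) by simp
          next
            case 3
            then have dd: "d - 2*D < D" "2*D + (d - 2*D) = d" using d by auto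
            then have "c j (d - 2*D) = c 0 (d - 2*D)" using allc j by blast
            then show ?thesis unfolding c_def using dd(2) by simp
          qed
        qed
      qed
    qed
    obtain v w where "v < n" "w < n" "lam v \<noteq> lam w" using ne by auto
    then show False using lam0[of v] lam0[of w] by simp
  qed
qed


lemma opt_facts:
  assumes n3: "n \<ge> 3"
  shows "n * k \<le> 3 * opt_k {..<n} (cycle_adj n) k"
    and "k \<le> 3 * D * m \<Longrightarrow> opt_k {..<n} (cycle_adj n) k \<le> n * (D * (m + 2*n) + (2*m + D))"
proof -
  have ex: "\<exists>c P. solves_eq {..<n} (cycle_adj n) k P \<and> cost P = c"
  proof -
    have "solves_eq {..<n} (cycle_adj n) k (proto n 1 k)" by (rule proto_solves[OF n3]) simp
    then show ?thesis by blast
  qed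
  then obtain c where "\<exists>P. solves_eq {..<n} (cycle_adj n) k P \<and> cost P = c" by blast
  then have "\<exists>P. solves_eq {..<n} (cycle_adj n) k P \<and> cost P = opt_k {..<n} (cycle_adj n) k"
    unfolding opt_k_def by (rule LeastI)
  then obtain P where P: "solves_eq {..<n} (cycle_adj n) k P" "cost P = opt_k {..<n} (cycle_adj n) k" by blast
  show "n * k \<le> 3 * opt_k {..<n} (cycle_adj n) k" using lower_cycle[OF n3 P(1)] P(2) by simp
  assume "k \<le> 3 * D * m"
  then have "solves_eq {..<n} (cycle_adj n) k (proto n m D)" by (rule proto_solves[OF n3])
  then have "opt_k {..<n} (cycle_adj n) k \<le> cost (proto n m D)"
    unfolding opt_k_def by (intro Least_le) blast
  then show "opt_k {..<n} (cycle_adj n) k \<le> n * (D * (m + 2*n) + (2*m + D))"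
    using proto_cost by simp
qed

lemma opt_limit:
  assumes n3: "n \<ge> 3"
  shows "opt_rate {..<n} (cycle_adj n) \<longlonglongrightarrow> real n / 3"
proof (rule LIMSEQ_I)
  fix r :: real assume r: "0 < r"
  define N where "N = real n"
  define m where "m = nat \<lceil>N * (2*N+1) / r\<rceil> + 1"
  define M where "M = real m"
  have M1: "M \<ge> 1" unfolding M_def m_def by simp
  have rM: "r * M \<ge> N * (2*N+1)"
  proof -
    have "N * (2*N+1) / r \<le> M" unfolding M_def m_def by linarith
    then show ?thesis using r by (simp add: field_simps)
  qed
  define K0 where "K0 = nat \<lceil>3 * N * (3*M + 2*N + 1) / r\<rceil> + 1"
  show "\<exists>no. \<forall>k\<ge>no. norm (opt_rate {..<n} (cycle_adj n) k - real n / 3) < r"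
  proof (intro exI allI impI)
    fix k assume k: "K0 \<le> k"
    define K where "K = real k"
    have rK: "r * K > 3 * N * (3*M + 2*N + 1)"
    proof -
      have "3 * N * (3*M + 2*N + 1) / r < K" unfolding K_def using k unfolding K0_def by linarith
      then show ?thesis using r by (simp add: field_simps)
    qed
    have K1: "K \<ge> 1" unfolding K_def using k K0_def by simp
    define D where "D = k div (3*m) + 1"
    have m0: "m > 0" unfolding m_def by simp
    have kD: "k \<le> 3 * D * m"
    proof -
      have "k = (3*m) * (k div (3*m)) + k mod (3*m)" by simp
      moreover have "k mod (3*m) < 3*m" using m0 by simp
      ultimately have "k < 3*m * D" unfolding D_def by (simp add: algebra_simps)
      then show ?thesis by (simp add: algebra_simps)
    qed
    define A where "A = real (opt_k {..<n} (cycle_adj n) k)"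
    define Dr where "Dr = real D"
    have lo: "N * K \<le> 3 * A"
      using opt_facts(1)[OF n3, of k] unfolding N_def K_def A_def by (simp add: of_nat_mult[symmetric] del: of_nat_mult)
    have up: "A \<le> N * (Dr * (M + 2*N) + (2*M + Dr))"
    proof -
      have "opt_k {..<n} (cycle_adj n) k \<le> n * (D * (m + 2*n) + (2*m + D))" by (rule opt_facts(2)[OF n3 kD])
      then have "real (opt_k {..<n} (cycle_adj n) k) \<le> real (n * (D * (m + 2*n) + (2*m + D)))" by (rule of_nat_mono)
      then show ?thesis unfolding A_def N_def Dr_def M_def by simp
    qed
    have DM: "3 * M * Dr \<le> K + 3 * M"
    proof -
      have "3 * m * D \<le> k + 3 * m" unfolding D_def
        using mult_div_mod_eq[of "3*m" k] by (simp add: algebra_simps)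
      then have "real (3 * m * D) \<le> real (k + 3 * m)" by (rule of_nat_mono)
      then show ?thesis unfolding M_def Dr_def K_def by simp
    qed
    have N0: "N \<ge> 0" unfolding N_def by simp
    have Dr0: "Dr \<ge> 0" unfolding Dr_def by simp
    have s1: "3 * A * M \<le> N * (3 * M * Dr) * (M + 2*N + 1) + 6 * N * M * M"
    proof -
      have "3 * A * M \<le> 3 * (N * (Dr * (M + 2*N) + (2*M + Dr))) * M"
        using up M1 by (intro mult_right_mono) auto
      also have "\<dots> = N * (3 * M * Dr) * (M + 2*N + 1) + 6 * N * M * M" by (simp add: algebra_simps)
      finally show ?thesis .
    qed
    have s2: "N * (3 * M * Dr) * (M + 2*N + 1) \<le> N * (K + 3 * M) * (M + 2*N + 1)"
      using DM N0 M1 by (intro mult_right_mono mult_left_mono) auto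
    have s3: "N * K * (2*N+1) \<le> K * (r * M)"
    proof -
      have "K * (N * (2*N+1)) \<le> K * (r * M)" using rM K1 by (intro mult_left_mono) auto
      then show ?thesis by (simp add: algebra_simps)
    qed
    have s4: "M * (3 * N * (3*M + 2*N + 1)) < M * (r * K)"
      using rK M1 by (intro mult_strict_left_mono) auto
    have eq: "N * (K + 3 * M) * (M + 2*N + 1) + 6 * N * M * M = N * K * M + N * K * (2*N+1) + M * (3 * N * (3*M + 2*N + 1))"
      by (simp add: algebra_simps)
    have "3 * A * M < N * K * M + 2 * r * K * M"
      using s1 s2 s3 s4 eq by (simp add: algebra_simps)
    also have "\<dots> \<le> (N + 3 * r) * K * M" using r K1 M1 by (simp add: algebra_simps)
    finally have "3 * A * M < (N + 3 * r) * K * M" .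
    then have hi: "3 * A < (N + 3 * r) * K" using M1 by simp
    have Kp: "K > 0" using K1 by simp
    have "opt_rate {..<n} (cycle_adj n) k = A / K" unfolding opt_rate_def A_def K_def by simp
    moreover have "N / 3 \<le> A / K" using lo Kp by (simp add: field_simps)
    moreover have "A / K < N / 3 + r" using hi Kp by (simp add: field_simps)
    ultimately show "norm (opt_rate {..<n} (cycle_adj n) k - real n / 3) < r" unfolding N_def by simp
  qed
qed

theorem corollary4p3:
  fixes n :: nat
  assumes "n \<ge> 3"
  shows "convergent (opt_rate {..<n} (cycle_adj n))
       \<and> real n / 3 \<le> lim (opt_rate {..<n} (cycle_adj n))
       \<and> lim (opt_rate {..<n} (cycle_adj n)) \<le> (real n + 1) / 3
       \<and> (n mod 3 = 0 \<longrightarrow> lim (opt_rate {..<n} (cycle_adj n)) = real n / 3)"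
proof -
  have L: "opt_rate {..<n} (cycle_adj n) \<longlonglongrightarrow> real n / 3" by (rule opt_limit[OF assms])
  then have c: "convergent (opt_rate {..<n} (cycle_adj n))" by (rule convergentI)
  have l: "lim (opt_rate {..<n} (cycle_adj n)) = real n / 3" using L by (rule limI)
  show ?thesis using c l by simp
qed

end
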